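(* Let $\mathcal V=\{p_1,\dots,p_M\}\subseteq\mathcal P$ ($M\ge2$) be such that for all $i\ne j$: (1) $\ell(\theta(p_i),\theta(p_j))\ge\alpha$; (2) $d_{KL}(p_i^s\|p_j^s)\le\beta$; (3) there exists an $f$-coupling $(X^s,Y^s)$ of $p_i^s$ and $p_j^s$ with $\mathbb{E}[d_h(X^s,Y^s)]\le D$. Then \[ \inf_{\hat\theta}\sup_{p\in\mathcal P}\mathbb{E}_{X^s\sim p^s}\left[\ell(\hat\theta(X^s),\theta(p))\right]\ge\max\left\{\frac{\alpha}{2}\left(1-\frac{\beta+\log 2}{\log M}\right),\ 0.4\alpha\min\left\{1,\frac{M}{e^{10\varepsilon D}}\right\}\right\}, \] where the infimum is over all $f$-restricted $(\varepsilon,0)$-differentially private estimators $\hat\theta$.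
   Context: $\mathcal X$ is a domain, $\mathcal P$ a set of distributions on $\mathcal X$ parameterized by an injective map $\theta:\mathcal P\to\Theta\subseteq\mathbb R^d$, and $\ell:\Theta\times\Theta\to\mathbb R_+$ a pseudo-metric. $p^s$ is the $s$-fold product of $p$. An estimator is a (possibly randomized) map $\hat\theta:\mathcal X^s\to\Theta$; it is $(\varepsilon,0)$-differentially private if for all $x^s,y^s$ differing in exactly one coordinate and every measurable $S$, $\Pr[\hat\theta(x^s)\in S]\le e^\varepsilon\Pr[\hat\theta(y^s)\in S]$. Fix $f:\mathcal X^s\to\mathcal Y$; $\hat\theta$ is $f$-restricted if $\hat\theta(X^s)=\hat\theta'(f(X^s))$ for some (possibly randomized) $\hat\theta'$. A pair $(X^s,Y^s)$ on a common probability space is an $f$-coupling of distributions $q_1,q_2$ on $\mathcal X^s$ if $f(X^s)$ is distributed as $f(Z_1)$, $Z_1\sim q_1$, and $f(Y^s)$ as $f(Z_2)$, $Z_2\sim q_2$. $d_h$ is Hamming distance on $\mathcal X^s$ and $d_{KL}$ the Kullback–Leibler divergence. *)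

theory Defs
  imports "HOL-Probability.Probability"
begin

definition sample_space :: "nat \<Rightarrow> 'x measure \<Rightarrow> (nat \<Rightarrow> 'x) measure" where
  "sample_space s X = PiM {..<s} (\<lambda>_. X)"

definition prod_pow :: "'x measure \<Rightarrow> nat \<Rightarrow> (nat \<Rightarrow> 'x) measure" where
  "prod_pow p s = PiM {..<s} (\<lambda>_. p)"

definition hamming :: "nat \<Rightarrow> (nat \<Rightarrow> 'x) \<Rightarrow> (nat \<Rightarrow> 'x) \<Rightarrow> nat" where
  "hamming s x y = card {i\<in>{..<s}. x i \<noteq> y i}"

text \<open>Kullback--Leibler divergence d_KL(P || Q) in nats, extended-real valued:
  +\<infinity> unless P is absolutely continuous w.r.t. Q with integrable log-density.\<close>
definition kl_div :: "'a measure \<Rightarrow> 'a measure \<Rightarrow> ereal" where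
  "kl_div P Q = (if absolutely_continuous Q P \<and> integrable P (entropy_density (exp 1) Q P)
                 then ereal (KL_divergence (exp 1) Q P) else \<infinity>)"

definition pseudometric_on :: "'t set \<Rightarrow> ('t \<Rightarrow> 't \<Rightarrow> real) \<Rightarrow> bool" where
  "pseudometric_on T l \<longleftrightarrow> (\<forall>a b. l a b \<ge> 0) \<and> (\<forall>a\<in>T. l a a = 0) \<and>
     (\<forall>a\<in>T. \<forall>b\<in>T. l a b = l b a) \<and>
     (\<forall>a\<in>T. \<forall>b\<in>T. \<forall>c\<in>T. l a c \<le> l a b + l b c)"

text \<open>A randomized estimator on samples is a Markov kernel K from the sample space into
  probability measures on Theta. (\<epsilon>,0)-differential privacy:\<close>
definition dp_kernel :: "nat \<Rightarrow> 'x measure \<Rightarrow> real \<Rightarrow> ((nat \<Rightarrow> 'x) \<Rightarrow> 't measure) \<Rightarrow> bool" where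
  "dp_kernel s X \<epsilon> K \<longleftrightarrow>
     (\<forall>x\<in>space (sample_space s X). \<forall>y\<in>space (sample_space s X). hamming s x y = 1 \<longrightarrow>
        (\<forall>S \<in> sets (K x). emeasure (K x) S \<le> ennreal (exp \<epsilon>) * emeasure (K y) S))"

text \<open>f-restricted estimators: K = K' o f for a kernel K' from Y into prob. measures on Theta
  (with its Borel sigma-algebra restricted to Theta).\<close>
definition f_restricted_dp_estimators ::
  "nat \<Rightarrow> 'x measure \<Rightarrow> ((nat \<Rightarrow> 'x) \<Rightarrow> 'y) \<Rightarrow> 'y measure \<Rightarrow> ('t::topological_space) set \<Rightarrow> real
     \<Rightarrow> ('y \<Rightarrow> 't measure) set" where
  "f_restricted_dp_estimators s X f Y \<Theta> \<epsilon> =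
     {K'. K' \<in> measurable Y (prob_algebra (restrict_space borel \<Theta>)) \<and> dp_kernel s X \<epsilon> (K' \<circ> f)}"

definition risk :: "nat \<Rightarrow> ((nat \<Rightarrow> 'x) \<Rightarrow> 'y) \<Rightarrow> ('y \<Rightarrow> 't measure) \<Rightarrow> ('t \<Rightarrow> 't \<Rightarrow> real)
     \<Rightarrow> 't \<Rightarrow> 'x measure \<Rightarrow> ennreal" where
  "risk s f K' l t p = (\<integral>\<^sup>+ x. (\<integral>\<^sup>+ u. ennreal (l u t) \<partial>(K' (f x))) \<partial>(prod_pow p s))"

text \<open>f-coupling of q1, q2 (measures on the sample space), represented by the joint law mu
  of (X^s, Y^s) on the product space, with E[d_h] \<le> D.\<close>
definition f_coupling_bound ::
  "nat \<Rightarrow> 'x measure \<Rightarrow> ((nat \<Rightarrow> 'x) \<Rightarrow> 'y) \<Rightarrow> 'y measure \<Rightarrow> (nat \<Rightarrow> 'x) measure \<Rightarrow> (nat \<Rightarrow> 'x) measure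
     \<Rightarrow> real \<Rightarrow> bool" where
  "f_coupling_bound s X f Y q1 q2 D \<longleftrightarrow>
     (\<exists>\<mu>. prob_space \<mu> \<and> sets \<mu> = sets (sample_space s X \<Otimes>\<^sub>M sample_space s X) \<and>
          distr \<mu> Y (\<lambda>z. f (fst z)) = distr q1 Y f \<and>
          distr \<mu> Y (\<lambda>z. f (snd z)) = distr q2 Y f \<and>
          (\<lambda>z. real (hamming s (fst z) (snd z))) \<in> borel_measurable \<mu> \<and>
          (\<integral>\<^sup>+ z. ennreal (real (hamming s (fst z) (snd z))) \<partial>\<mu>) \<le> ennreal D)"

end

theory Submission
  imports Defs
begin


lemma dp_const:
  fixes M :: nat and c :: real
  assumes M: "M \<ge> 2" and c: "c \<ge> 0"
  shows "(real M - 1) * exp (-5*c) * (1 + 4*c) \<ge> 0.8 * min 1 (real M / exp (10*c))"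
proof -
  define y where "y = exp (5*c)"
  have y1: "y \<ge> 1" using c by (simp add: y_def)
  have e10: "exp (10*c) = y^2" unfolding y_def by (simp add: power2_eq_square flip: exp_add)
  have em5: "exp (-5*c) = 1/y" unfolding y_def by (simp add: exp_minus field_simps)
  have em5': "exp (- (5*c)) = 1/y" unfolding y_def by (simp add: exp_minus field_simps)
  show ?thesis
  proof (cases "M \<ge> 3")
    case True
    have goal: "(real M - 1) / y \<ge> 0.8 * min 1 (real M / y^2)"
    proof (cases "y^2 \<le> real M")
      case True
      have "y \<le> sqrt (real M)" using True y1 by (metis abs_of_nonneg less_one not_less real_sqrt_abs real_sqrt_le_mono zero_le_one order_trans)
      have sM: "sqrt (real M) \<ge> 1" using M by simp
      have "sqrt (real M) * sqrt (real M) = real M" by simp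
      have "real M - 1 \<ge> sqrt (real M)"
      proof -
        have "real M \<ge> 3" using \<open>M \<ge> 3\<close> by simp
        then have "sqrt (real M) \<ge> sqrt 3" by simp
        moreover have "sqrt 3 \<ge> (1.7::real)" by (rule real_le_rsqrt) (simp add: power2_eq_square)
        ultimately have s17: "sqrt (real M) \<ge> 1.7" by linarith
        have "sqrt (real M) * sqrt (real M) \<ge> 1.7 * sqrt (real M)" by (rule mult_right_mono) (use s17 in auto)
        then show ?thesis using \<open>sqrt (real M) * sqrt (real M) = real M\<close> s17 by linarith
      qed
      then have "(real M - 1) / y \<ge> 1" using \<open>y \<le> sqrt (real M)\<close> y1 by (simp add: field_simps)
      then show ?thesis by linarith
    next
      case False
      have "y \<ge> 1" by fact
      have "(real M - 1) * y \<ge> 0.8 * real M"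
      proof -
        have "real M \<ge> 3" using \<open>M \<ge> 3\<close> by simp
        have "y^2 > 3" using False \<open>real M \<ge> 3\<close> by linarith
        have "y > 1.7"
        proof (rule ccontr)
          assume "\<not> y > 1.7"
          then have "y * y \<le> 1.7 * 1.7" by (intro mult_mono) (use y1 in auto)
          then show False using \<open>y^2 > 3\<close> by (simp add: power2_eq_square)
        qed
        have "(real M - 1) * y \<ge> (real M - 1) * 1.7" by (rule mult_left_mono) (use \<open>y > 1.7\<close> \<open>real M \<ge> 3\<close> in auto)
        moreover have "(real M - 1) * 1.7 = 1.7 * real M - 1.7" by (simp only: left_diff_distrib mult_1_left mult.commute)
        ultimately show ?thesis using \<open>real M \<ge> 3\<close> by linarith
      qed
      then have "(real M - 1) / y \<ge> 0.8 * (real M / y^2)" using y1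
        by (simp add: field_simps power2_eq_square)
      moreover have "min 1 (real M / y^2) \<le> real M / y^2" by simp
      ultimately show ?thesis by linarith
    qed
    have X1: "(real M - 1) * exp (-5*c) * (1 + 4*c) \<ge> (real M - 1) * exp (-5*c)"
    proof -
      have nn: "(real M - 1) * exp (-5*c) \<ge> 0" using M by simp
      have "(real M - 1) * exp (-5*c) * 1 \<le> (real M - 1) * exp (-5*c) * (1 + 4*c)"
        by (rule mult_left_mono[OF _ nn]) (use c in simp)
      then show ?thesis by simp
    qed
    have X2: "(real M - 1) * exp (-5*c) = (real M - 1) / y" by (subst em5) simp
    have X: "(real M - 1) * exp (-5*c) * (1 + 4*c) \<ge> (real M - 1) / y" using X1 X2 by linarith
    show ?thesis unfolding e10 using X goal by linarith
  next
    case False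
    then have M2: "M = 2" using M by simp
    have ln2: "ln (2::real) > 0.4"
    proof -
      have "exp (0.4::real) \<le> 1 + 0.4 + 0.4^2" by (rule exp_bound) auto
      then have "exp (0.4::real) < 2" by (simp add: power2_eq_square)
      then show ?thesis by (metis exp_less_cancel_iff exp_ln zero_less_numeral)
    qed
    show ?thesis
    proof (cases "y^2 \<le> 2")
      case True
      have "exp (10*c) \<le> 2" using True e10 by simp
      then have "10*c \<le> ln 2" by (metis exp_le_cancel_iff exp_ln zero_less_numeral)
      then have c01: "5*c \<le> 1/2" using ln_2_less_1 by linarith
      have "y \<le> 1 + 5*c + (5*c)^2" unfolding y_def using c c01 by (intro exp_bound) auto
      also have "\<dots> \<le> 1.25 * (1 + 4*c)"
      proof -
        have "(5*c)*(5*c) \<le> (1/2)*(1/2)" by (intro mult_mono) (use c c01 in auto)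
        then show ?thesis by (simp add: power2_eq_square)
      qed
      finally have "(1 + 4*c) / y \<ge> 0.8" using y1 by (simp add: field_simps)
      moreover have "min 1 (real M / exp (10*c)) \<le> 1" by simp
      moreover have "(real M - 1) * exp (-5*c) * (1 + 4*c) = (1 + 4*c) / y" using M2 by (subst em5) simp
      ultimately show ?thesis by linarith
    next
      case False
      then have "exp (10*c) > 2" using e10 by simp
      then have "10*c > ln 2" by (metis exp_less_cancel_iff exp_ln zero_less_numeral)
      then have "c > (1/25)" using ln2 by linarith
      have "y > 1.41"
      proof (rule ccontr)
        assume "\<not> y > 1.41"
        then have "y * y \<le> 1.41 * 1.41" by (intro mult_mono) (use y1 in auto)
        then show False using False by (simp add: power2_eq_square)
      qed
      have "(1 + 4*c) * y \<ge> 1.16 * 1.41" by (intro mult_mono) (use \<open>c > (1/25)\<close> \<open>y > 1.41\<close> in auto)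
      then have "(1 + 4*c) * y \<ge> 1.6" by simp
      then have "(1 + 4*c) / y \<ge> 0.8 * (2 / y^2)" using y1 by (simp add: field_simps power2_eq_square)
      moreover have "min 1 (real M / exp (10*c)) \<le> 2 / y^2" using M2 e10 by simp
      moreover have "(real M - 1) * exp (-5*c) * (1 + 4*c) = (1 + 4*c) / y" using M2 by (subst em5) simp
      ultimately show ?thesis by linarith
    qed
  qed
qed

lemma dp_finite:
  fixes a :: "nat \<Rightarrow> nat \<Rightarrow> real" and M :: nat and c \<rho> :: real
  assumes M: "M \<ge> 2" and c: "c \<ge> 0"
    and nn: "\<And>i k. i < M \<Longrightarrow> k < M \<Longrightarrow> a i k \<ge> 0"
    and le1: "\<And>i. i < M \<Longrightarrow> a i i \<le> 1"
    and cp: "\<And>i j. i < M \<Longrightarrow> j < M \<Longrightarrow> i \<noteq> j \<Longrightarrow> a j i \<ge> exp (-5*c) * ((1+5*c) * a i i - c)"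
    and \<rho>0: "\<rho> > 0" and \<rho>8: "\<rho> \<le> 0.8"
    and const: "(real M - 1) * exp (-5*c) * (1 + 4*c) \<ge> \<rho>"
  shows "\<exists>i<M. 1 - a i i + (\<Sum>k\<in>{..<M}-{i}. a i k) \<ge> \<rho>"
proof (rule ccontr)
  assume "\<not> ?thesis"
  then have H: "\<And>i. i < M \<Longrightarrow> 1 - a i i + (\<Sum>k\<in>{..<M}-{i}. a i k) < \<rho>" by auto
  define \<tau> where "\<tau> = 1 - \<rho>"
  define g where "g k = exp (-5*c) * ((1+5*c) * a k k - c)" for k
  define S where "S = (\<Sum>k<M. a k k)"
  define Osum where "Osum = (\<Sum>i<M. \<Sum>k\<in>{..<M}-{i}. a i k)"
  define lam where "lam = (real M - 1) * exp (-5*c)"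
  have M00: "0 \<in> {..<M}" using M by simp
  then have M0: "{..<M} \<noteq> {}" by blast
  have "(\<Sum>i<M. 1 - a i i + (\<Sum>k\<in>{..<M}-{i}. a i k)) < (\<Sum>i<M. \<rho>)"
    by (rule sum_strict_mono) (use M0 H in auto)
  then have sumH: "real M - S + Osum < real M * \<rho>"
    by (simp add: S_def Osum_def sum.distrib sum_subtractf)
  have "Osum \<ge> (\<Sum>i<M. \<Sum>k\<in>{..<M}-{i}. g k)"
    unfolding Osum_def g_def by (intro sum_mono) (use cp in auto)
  also have "(\<Sum>i<M. \<Sum>k\<in>{..<M}-{i}. g k) = (\<Sum>i<M. (\<Sum>k<M. g k) - g i)"
    by (intro sum.cong refl) (simp add: sum_diff1)
  also have "\<dots> = real M * (\<Sum>k<M. g k) - (\<Sum>k<M. g k)"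
    by (simp add: sum_subtractf)
  also have "(\<Sum>k<M. g k) = exp (-5*c) * ((1+5*c) * S - real M * c)"
    by (simp add: g_def S_def sum_distrib_left[symmetric] sum_subtractf)
  finally have Olow: "Osum \<ge> lam * ((1+5*c) * S - real M * c)"
    by (simp add: lam_def algebra_simps)
  have Osum0: "Osum \<ge> 0" unfolding Osum_def by (intro sum_nonneg) (use nn in auto)
  have S_le: "S \<le> real M" unfolding S_def using sum_mono[of "{..<M}" "\<lambda>k. a k k" "\<lambda>_. 1"] le1 by auto
  have S_gt: "S \<ge> real M * \<tau>" using sumH Osum0 by (simp add: \<tau>_def algebra_simps)
  define \<psi> where "\<psi> x = lam * ((1+5*c) * x - real M * c) - (x - real M * \<tau>)" for x
  have lam0: "lam \<ge> 0" using M by (simp add: lam_def)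
  have p1: "\<psi> (real M * \<tau>) \<ge> 0"
  proof -
    have "(1+5*c) * \<tau> \<ge> c"
    proof -
      have "(1+5*c) * \<tau> \<ge> (1+5*c) * 0.2" by (rule mult_left_mono) (use \<rho>8 c in \<open>auto simp: \<tau>_def\<close>)
      then show ?thesis by simp
    qed
    then have "(1+5*c) * (real M * \<tau>) - real M * c \<ge> 0"
      using mult_left_mono[of c "(1+5*c) * \<tau>" "real M"] by (simp add: algebra_simps)
    then show ?thesis unfolding \<psi>_def using lam0 by simp
  qed
  have p2: "\<psi> (real M) \<ge> 0"
  proof -
    have "\<psi> (real M) = real M * (lam * (1 + 4*c) - \<rho>)" unfolding \<psi>_def \<tau>_def by (simp add: algebra_simps)
    moreover have "lam * (1 + 4*c) - \<rho> \<ge> 0" using const by (simp add: lam_def)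
    ultimately show ?thesis by simp
  qed
  have ident: "\<psi> S * (real M - real M * \<tau>) = (real M - S) * \<psi> (real M * \<tau>) + (S - real M * \<tau>) * \<psi> (real M)"
    unfolding \<psi>_def by (simp add: algebra_simps)
  have "(real M - S) * \<psi> (real M * \<tau>) + (S - real M * \<tau>) * \<psi> (real M) \<ge> 0"
    using p1 p2 S_le S_gt by (intro add_nonneg_nonneg mult_nonneg_nonneg) auto
  moreover have "real M - real M * \<tau> > 0" using \<rho>0 M by (simp add: \<tau>_def algebra_simps)
  ultimately have "\<psi> S \<ge> 0" using ident by (metis zero_le_mult_iff not_less less_le)
  then have "Osum \<ge> S - real M * \<tau>" using Olow unfolding \<psi>_def by linarith
  then show False using sumH by (simp add: \<tau>_def algebra_simps)
qed

lemma fano_finite: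
  fixes a :: "nat \<Rightarrow> nat \<Rightarrow> real" and M :: nat and \<beta> :: real
  assumes M: "M \<ge> 2"
    and nn: "\<And>k. k < M \<Longrightarrow> a 0 k \<ge> 0"
    and sum0: "(\<Sum>k<M. a 0 k) \<le> 1"
    and kl: "\<And>i. 0 < i \<Longrightarrow> i < M \<Longrightarrow>
               \<beta> \<ge> ln (real M) * a i i + 1/2 - ln 2 - (exp (ln (real M)) - 1) * a 0 i / 2"
  shows "\<exists>i<M. a i i \<le> (\<beta> + ln 2) / ln (real M)"
proof (rule ccontr)
  assume "\<not> ?thesis"
  then have H: "\<And>i. i < M \<Longrightarrow> a i i > (\<beta> + ln 2) / ln (real M)" by auto
  have lnM: "ln (real M) > 0" using M by simp
  have eM: "exp (ln (real M)) = real M" using M by simp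
  have big: "a 0 i > 1 / (real M - 1)" if i: "0 < i" "i < M" for i
  proof -
    have "ln (real M) * a i i > \<beta> + ln 2"
      using H[OF i(2)] lnM by (simp add: field_simps)
    then have "(real M - 1) * a 0 i > 1" using kl[OF i] eM by simp
    then show ?thesis using M by (simp add: field_simps)
  qed
  have "(\<Sum>i\<in>{1..<M}. 1 / (real M - 1)) < (\<Sum>i\<in>{1..<M}. a 0 i)"
    by (rule sum_strict_mono) (use big M in auto)
  moreover have "(\<Sum>i\<in>{1..<M}. 1 / (real M - 1)) = 1" using M by (simp add: of_nat_diff)
  moreover have "(\<Sum>k<M. a 0 k) = a 0 0 + (\<Sum>i\<in>{1..<M}. a 0 i)"
  proof -
    have "{..<M} = insert 0 {1..<M}" using M by auto
    then show ?thesis by simp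
  qed
  ultimately show False using sum0 nn[of 0] M by simp
qed

lemma nn_integral_le_scaled:
  assumes sets: "sets N1 = sets N2"
    and le: "\<And>A. A \<in> sets N1 \<Longrightarrow> emeasure N1 A \<le> ennreal C * emeasure N2 A"
    and fm: "f \<in> borel_measurable N2"
  shows "nn_integral N1 f \<le> ennreal C * nn_integral N2 f"
proof -
  have sp: "space N1 = space N2" using sets by (rule sets_eq_imp_space_eq)
  have all: "emeasure N1 A \<le> emeasure (scale_measure (ennreal C) N2) A" for A
  proof (cases "A \<in> sets N1")
    case True then show ?thesis using le by simp
  next
    case False then show ?thesis by (simp add: emeasure_notin_sets)
  qed
  have "N1 \<le> scale_measure (ennreal C) N2"
    using all by (simp add: le_measure_iff sp space_scale_measure sets le_fun_def)
  then have "nn_integral N1 f \<le> nn_integral (scale_measure (ennreal C) N2) f"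
    by (intro nn_integral_mono_measure) (simp_all add: sets)
  also have "\<dots> = ennreal C * nn_integral N2 f"
    by (rule nn_integral_scale_measure) (rule fm)
  finally show ?thesis .
qed

lemma group_privacy:
  fixes K :: "(nat \<Rightarrow> 'x) \<Rightarrow> 'a measure"
  assumes dp: "dp_kernel s X \<epsilon> K"
    and sets: "\<And>z. z \<in> space (sample_space s X) \<Longrightarrow> sets (K z) = \<Sigma>"
  shows "x \<in> space (sample_space s X) \<Longrightarrow> y \<in> space (sample_space s X) \<Longrightarrow> A \<in> \<Sigma> \<Longrightarrow>
    emeasure (K x) A \<le> ennreal (exp (\<epsilon> * real (hamming s x y))) * emeasure (K y) A"
proof (induction "hamming s x y" arbitrary: x)
  case 0
  have sp: "space (sample_space s X) = PiE {..<s} (\<lambda>_. space X)"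
    by (simp add: sample_space_def space_PiM)
  have "finite {i\<in>{..<s}. x i \<noteq> y i}" by simp
  then have "{i\<in>{..<s}. x i \<noteq> y i} = {}" using 0(1) by (simp add: hamming_def)
  then have "x = y" using 0(2,3) sp by (intro PiE_ext[of x "{..<s}" "\<lambda>_. space X" y]) auto
  then show ?case by (simp add: hamming_def)
next
  case (Suc n)
  have sp: "space (sample_space s X) = PiE {..<s} (\<lambda>_. space X)"
    by (simp add: sample_space_def space_PiM)
  define D where "D = {i\<in>{..<s}. x i \<noteq> y i}"
  have cD: "card D = Suc n" using Suc(2) by (simp add: hamming_def D_def)
  then have "D \<noteq> {}" by auto
  then obtain i where iD: "i \<in> D" by auto
  then have i: "i < s" "x i \<noteq> y i" by (auto simp: D_def)
  define z where "z = x(i := y i)"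
  have "y i \<in> space X" using Suc(4) i sp by (auto simp: PiE_iff)
  then have z: "z \<in> space (sample_space s X)" using Suc(3) i sp by (auto simp: z_def PiE_iff extensional_def)
  have "{k\<in>{..<s}. x k \<noteq> z k} = {i}" using i by (auto simp: z_def)
  then have h1: "hamming s x z = 1" by (simp add: hamming_def)
  have "{k\<in>{..<s}. z k \<noteq> y k} = D - {i}" by (auto simp: z_def D_def)
  then have h2: "n = hamming s z y" using cD iD by (simp add: hamming_def)
  have IH: "emeasure (K z) A \<le> ennreal (exp (\<epsilon> * real n)) * emeasure (K y) A"
    using Suc(1)[OF h2 z Suc(4,5)] h2 by simp
  have A1: "A \<in> sets (K x)" using sets[OF Suc(3)] Suc(5) by simp
  have step: "emeasure (K x) A \<le> ennreal (exp \<epsilon>) * emeasure (K z) A"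
    using dp Suc(3) z h1 A1 unfolding dp_kernel_def by auto
  also have "\<dots> \<le> ennreal (exp \<epsilon>) * (ennreal (exp (\<epsilon> * real n)) * emeasure (K y) A)"
    by (rule mult_left_mono[OF IH]) simp
  also have "\<dots> = ennreal (exp \<epsilon> * exp (\<epsilon> * real n)) * emeasure (K y) A"
    by (simp add: ennreal_mult mult.assoc)
  also have "exp \<epsilon> * exp (\<epsilon> * real n) = exp (\<epsilon> * real (hamming s x y))"
    by (simp add: Suc(2)[symmetric] exp_add[symmetric] algebra_simps)
  finally show ?case .
qed

lemma pw_real:
  fixes g1 g2 e d t :: real
  assumes g1: "0 \<le> g1" "g1 \<le> 1" and ed: "e * d \<ge> 0"
    and pr: "g1 \<le> exp (e * d) * g2"
  shows "exp (-t) * ((1+t) * g1 - e * d) \<le> g2"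
proof -
  have ex: "exp (- (e * d)) * exp (e * d) = 1" by (simp add: exp_minus_inverse mult.commute)
  have "exp (- (e * d)) * g1 \<le> exp (- (e * d)) * (exp (e * d) * g2)"
    by (rule mult_left_mono[OF pr]) simp
  also have "\<dots> = (exp (- (e * d)) * exp (e * d)) * g2" by (simp only: mult.assoc)
  also have "\<dots> = g2" by (simp only: ex mult_1_left)
  finally have A: "exp (- (e * d)) * g1 \<le> g2" .
  have "exp (-t) * (1 + (t - e * d)) \<le> exp (-t) * exp (t - e * d)"
    by (rule mult_left_mono) auto
  also have "\<dots> = exp (- (e * d))" by (simp add: exp_add[symmetric])
  finally have B: "exp (-t) * (1 + (t - e * d)) \<le> exp (- (e * d))" .
  have C: "exp (-t) * (1 + (t - e * d)) * g1 \<le> exp (- (e * d)) * g1"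
    by (rule mult_right_mono[OF B g1(1)])
  have "e * d * g1 \<le> e * d" using ed g1 by (simp add: mult_left_le)
  then have "(1+t) * g1 - e * d \<le> (1 + (t - e * d)) * g1" by (simp add: algebra_simps)
  then have "exp (-t) * ((1+t) * g1 - e * d) \<le> exp (-t) * ((1 + (t - e * d)) * g1)"
    by (rule mult_left_mono) simp
  with C A show ?thesis by (simp only: mult.assoc)
qed

lemma coupling_ineq:
  fixes G :: "'y \<Rightarrow> real" and f :: "(nat \<Rightarrow> 'x) \<Rightarrow> 'y"
  assumes f: "f \<in> measurable (sample_space s X) Y"
    and Gm: "G \<in> borel_measurable Y"
    and G01: "\<And>y. y \<in> space Y \<Longrightarrow> 0 \<le> G y \<and> G y \<le> 1"
    and priv: "\<And>x y. x \<in> space (sample_space s X) \<Longrightarrow> y \<in> space (sample_space s X) \<Longrightarrow>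
                 G (f x) \<le> exp (e * real (hamming s x y)) * G (f y)"
    and e: "e \<ge> 0"
    and q1: "prob_space q1" "sets q1 = sets (sample_space s X)"
    and q2: "prob_space q2" "sets q2 = sets (sample_space s X)"
    and cb: "f_coupling_bound s X f Y q1 q2 D"
  shows "(\<integral>x. G (f x) \<partial>q2) \<ge> exp (-t) * ((1+t) * (\<integral>x. G (f x) \<partial>q1) - e * max D 0)"
proof -
  let ?S = "sample_space s X"
  obtain \<mu> where \<mu>: "prob_space \<mu>" "sets \<mu> = sets (?S \<Otimes>\<^sub>M ?S)"
    "distr \<mu> Y (\<lambda>z. f (fst z)) = distr q1 Y f"
    "distr \<mu> Y (\<lambda>z. f (snd z)) = distr q2 Y f"
    and dm: "(\<lambda>z. real (hamming s (fst z) (snd z))) \<in> borel_measurable \<mu>"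
    and dn: "(\<integral>\<^sup>+ z. ennreal (real (hamming s (fst z) (snd z))) \<partial>\<mu>) \<le> ennreal D"
    using cb unfolding f_coupling_bound_def by blast
  interpret \<mu>: prob_space \<mu> by (rule \<mu>(1))
  interpret Q1: prob_space q1 by (rule q1(1))
  interpret Q2: prob_space q2 by (rule q2(1))
  define d :: "(nat \<Rightarrow> 'x) \<times> (nat \<Rightarrow> 'x) \<Rightarrow> real" where "d = (\<lambda>z. real (hamming s (fst z) (snd z)))"
  have spmu: "space \<mu> = space ?S \<times> space ?S"
    using sets_eq_imp_space_eq[OF \<mu>(2)] by (simp add: space_pair_measure)
  have m1: "(\<lambda>z. f (fst z)) \<in> measurable \<mu> Y"
    using measurable_compose[OF measurable_fst f] by (simp add: measurable_cong_sets[OF \<mu>(2) refl])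
  have m2: "(\<lambda>z. f (snd z)) \<in> measurable \<mu> Y"
    using measurable_compose[OF measurable_snd f] by (simp add: measurable_cong_sets[OF \<mu>(2) refl])
  have fq1: "f \<in> measurable q1 Y" using f by (simp add: measurable_cong_sets[OF q1(2) refl])
  have fq2: "f \<in> measurable q2 Y" using f by (simp add: measurable_cong_sets[OF q2(2) refl])
  have I1: "(\<integral>x. G (f x) \<partial>q1) = (\<integral>z. G (f (fst z)) \<partial>\<mu>)"
  proof -
    have "(\<integral>x. G (f x) \<partial>q1) = (\<integral>y. G y \<partial>distr q1 Y f)"
      by (rule integral_distr[symmetric, OF fq1 Gm])
    also have "\<dots> = (\<integral>y. G y \<partial>distr \<mu> Y (\<lambda>z. f (fst z)))" by (simp add: \<mu>(3))
    also have "\<dots> = (\<integral>z. G (f (fst z)) \<partial>\<mu>)" by (rule integral_distr[OF m1 Gm])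
    finally show ?thesis .
  qed
  have I2: "(\<integral>x. G (f x) \<partial>q2) = (\<integral>z. G (f (snd z)) \<partial>\<mu>)"
  proof -
    have "(\<integral>x. G (f x) \<partial>q2) = (\<integral>y. G y \<partial>distr q2 Y f)"
      by (rule integral_distr[symmetric, OF fq2 Gm])
    also have "\<dots> = (\<integral>y. G y \<partial>distr \<mu> Y (\<lambda>z. f (snd z)))" by (simp add: \<mu>(4))
    also have "\<dots> = (\<integral>z. G (f (snd z)) \<partial>\<mu>)" by (rule integral_distr[OF m2 Gm])
    finally show ?thesis .
  qed
  have dmeas: "d \<in> borel_measurable \<mu>" using dm by (simp add: d_def)
  have dint: "integrable \<mu> d"
    by (rule integrableI_nonneg) (use dmeas dn in \<open>auto simp: d_def intro: le_less_trans\<close>)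
  have dle: "(\<integral>z. d z \<partial>\<mu>) \<le> max D 0"
  proof -
    have "ennreal (\<integral>z. d z \<partial>\<mu>) = (\<integral>\<^sup>+ z. ennreal (d z) \<partial>\<mu>)"
      by (rule nn_integral_eq_integral[symmetric]) (use dint in \<open>auto simp: d_def\<close>)
    also have "\<dots> \<le> ennreal D" using dn by (simp add: d_def)
    finally have *: "ennreal (\<integral>z. d z \<partial>\<mu>) \<le> ennreal D" .
    show ?thesis
    proof (cases "D \<ge> 0")
      case True then show ?thesis using * by simp
    next
      case False
      then have "ennreal D = 0" by (simp add: ennreal_eq_0_iff)
      then have "ennreal (\<integral>z. d z \<partial>\<mu>) = 0" using * by (metis le_zero_eq)
      then have "(\<integral>z. d z \<partial>\<mu>) \<le> 0" by (simp only: ennreal_eq_0_iff)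
      then show ?thesis by simp
    qed
  qed
  have g1m: "(\<lambda>z. G (f (fst z))) \<in> borel_measurable \<mu>" using measurable_compose[OF m1 Gm] .
  have g2m: "(\<lambda>z. G (f (snd z))) \<in> borel_measurable \<mu>" using measurable_compose[OF m2 Gm] .
  have fS: "f x \<in> space Y" if "x \<in> space ?S" for x using f that by (rule measurable_space)
  have g1int: "integrable \<mu> (\<lambda>z. G (f (fst z)))"
    by (rule \<mu>.integrable_const_bound[where B=1]) (use g1m G01 fS spmu in auto)
  have g2int: "integrable \<mu> (\<lambda>z. G (f (snd z)))"
    by (rule \<mu>.integrable_const_bound[where B=1]) (use g2m G01 fS spmu in auto)
  have pw: "exp (-t) * ((1+t) * G (f (fst z)) - e * d z) \<le> G (f (snd z))" if z: "z \<in> space \<mu>" for z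
  proof -
    have zz: "fst z \<in> space ?S" "snd z \<in> space ?S" using z unfolding spmu by (auto simp only: mem_Times_iff)
    define g1 where "g1 = G (f (fst z))"
    define g2 where "g2 = G (f (snd z))"
    have g1: "0 \<le> g1" "g1 \<le> 1" using G01[OF fS[OF zz(1)]] by (auto simp: g1_def)
    have d0: "d z \<ge> 0" unfolding d_def by simp
    have ed: "e * d z \<ge> 0" using e d0 by simp
    have pr: "g1 \<le> exp (e * d z) * g2" using priv[OF zz] by (simp add: g1_def g2_def d_def)
    from pw_real[OF g1 ed pr] show ?thesis unfolding g1_def g2_def .
  qed
  have lhsint: "integrable \<mu> (\<lambda>z. exp (-t) * ((1+t) * G (f (fst z)) - e * d z))"
    using g1int dint by auto
  have "(\<integral>z. exp (-t) * ((1+t) * G (f (fst z)) - e * d z) \<partial>\<mu>) \<le> (\<integral>z. G (f (snd z)) \<partial>\<mu>)"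
    by (rule integral_mono[OF lhsint g2int pw])
  moreover have "(\<integral>z. exp (-t) * ((1+t) * G (f (fst z)) - e * d z) \<partial>\<mu>)
      = exp (-t) * ((1+t) * (\<integral>z. G (f (fst z)) \<partial>\<mu>) - e * (\<integral>z. d z \<partial>\<mu>))"
    using g1int dint by simp
  moreover have "exp (-t) * ((1+t) * (\<integral>z. G (f (fst z)) \<partial>\<mu>) - e * max D 0)
      \<le> exp (-t) * ((1+t) * (\<integral>z. G (f (fst z)) \<partial>\<mu>) - e * (\<integral>z. d z \<partial>\<mu>))"
    using dle e by (intro mult_left_mono) (auto intro: mult_left_mono)
  ultimately show ?thesis unfolding I1 I2 by linarith
qed

lemma xlogx_fenchel:
  fixes r h :: real
  assumes "r \<ge> 0"
  shows "r * ln r \<ge> r * h - exp (h - 1)"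
proof (cases "r = 0")
  case True then show ?thesis by simp
next
  case False
  then have r: "r > 0" using assms by simp
  have "exp (h - 1 - ln r) \<ge> 1 + (h - 1 - ln r)" by (rule exp_ge_add_one_self)
  moreover have "exp (h - 1 - ln r) = exp (h - 1) / r" using r by (simp add: exp_diff)
  ultimately have "exp (h - 1) / r \<ge> h - ln r" by simp
  then have "exp (h - 1) \<ge> (h - ln r) * r" using r by (simp add: field_simps)
  then show ?thesis by (simp add: algebra_simps)
qed

lemma exp_chord:
  fixes A g :: real
  assumes A: "A \<ge> 0" and g: "0 \<le> g" "g \<le> 1"
  shows "exp (A * g) \<le> 1 + (exp A - 1) * g"
proof -
  have "exp (A * ((1 - g) *\<^sub>R 0 + g *\<^sub>R 1)) \<le> (1 - g) * exp (A * 0) + g * exp (A * 1)"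
    using convex_onD[OF convex_on_exp[OF A], of g 0 1] g by simp
  then show ?thesis by (simp add: algebra_simps)
qed

lemma kl_bound:
  fixes P Q :: "'a measure" and g :: "'a \<Rightarrow> real"
  assumes P: "prob_space P" and Q: "prob_space Q" and sPQ: "sets P = sets Q"
    and kl: "kl_div P Q \<le> ereal \<beta>"
    and gm: "g \<in> borel_measurable Q" and g01: "\<And>x. x \<in> space Q \<Longrightarrow> 0 \<le> g x \<and> g x \<le> 1"
    and A: "A \<ge> 0"
  shows "\<beta> \<ge> A * (\<integral>x. g x \<partial>P) + 1/2 - ln 2 - (exp A - 1) * (\<integral>x. g x \<partial>Q) / 2"
proof -
  have ac: "absolutely_continuous Q P" and int: "integrable P (entropy_density (exp 1) Q P)"
    and KLle: "KL_divergence (exp 1) Q P \<le> \<beta>"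
    using kl unfolding kl_div_def by (auto split: if_splits)
  interpret Q: prob_space Q by (rule Q)
  interpret P: prob_space P by (rule P)
  define r where "r x = enn2real (RN_deriv Q P x)" for x
  have rm: "r \<in> borel_measurable Q" unfolding r_def by measurable
  have r0: "r x \<ge> 0" for x by (simp add: r_def)
  have dens: "density Q (RN_deriv Q P) = P" by (rule Q.density_RN_deriv[OF ac sPQ])
  have fin: "AE x in Q. RN_deriv Q P x \<noteq> \<infinity>"
    by (rule Q.RN_deriv_finite[OF _ ac sPQ]) unfold_locales
  have densr: "density Q (\<lambda>x. ennreal (r x)) = P"
  proof -
    have "density Q (\<lambda>x. ennreal (r x)) = density Q (RN_deriv Q P)"
      by (rule density_cong) (use rm fin in \<open>auto simp: r_def ennreal_enn2real_if\<close>)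
    then show ?thesis using dens by simp
  qed
  have ent: "entropy_density (exp 1) Q P x = ln (r x)" for x
    by (simp add: entropy_density_def r_def log_def)
  have lnm: "(\<lambda>x. ln (r x)) \<in> borel_measurable Q" using rm by measurable
  have intP: "integrable P (\<lambda>x. ln (r x))" using int by (simp add: ent[abs_def])
  then have intQ: "integrable Q (\<lambda>x. r x * ln (r x))"
    using integrable_density[OF lnm rm, of ] r0 densr by simp
  have KLeq: "KL_divergence (exp 1) Q P = (\<integral>x. r x * ln (r x) \<partial>Q)"
  proof -
    have "KL_divergence (exp 1) Q P = (\<integral>x. ln (r x) \<partial>P)"
      by (simp add: KL_divergence_def ent[abs_def])
    also have "\<dots> = (\<integral>x. ln (r x) \<partial>density Q (\<lambda>x. ennreal (r x)))" by (simp add: densr)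
    also have "\<dots> = (\<integral>x. r x * ln (r x) \<partial>Q)"
      using integral_density[OF lnm rm] r0 by simp
    finally show ?thesis .
  qed
  define h where "h x = A * g x + 1 - ln 2" for x
  have hm: "h \<in> borel_measurable Q" unfolding h_def using gm by measurable
  have gP: "g \<in> borel_measurable P" using gm by (simp add: measurable_cong_sets[OF sPQ refl])
  have hP: "h \<in> borel_measurable P" using hm by (simp add: measurable_cong_sets[OF sPQ refl])
  have spPQ: "space P = space Q" using sPQ by (rule sets_eq_imp_space_eq)
  have gintP: "integrable P g"
    by (rule P.integrable_const_bound[where B=1]) (use gP g01 spPQ in auto)
  have gintQ: "integrable Q g"
    by (rule Q.integrable_const_bound[where B=1]) (use gm g01 in auto)
  have hintP: "integrable P h" using gintP by (simp add: h_def[abs_def])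
  then have hintQ: "integrable Q (\<lambda>x. r x * h x)"
    using integrable_density[OF hm rm] r0 densr by simp
  have hP_eq: "(\<integral>x. h x \<partial>P) = (\<integral>x. r x * h x \<partial>Q)"
  proof -
    have "(\<integral>x. h x \<partial>P) = (\<integral>x. h x \<partial>density Q (\<lambda>x. ennreal (r x)))" by (simp add: densr)
    also have "\<dots> = (\<integral>x. r x * h x \<partial>Q)" using integral_density[OF hm rm] r0 by simp
    finally show ?thesis .
  qed
  have hval: "(\<integral>x. h x \<partial>P) = A * (\<integral>x. g x \<partial>P) + 1 - ln 2"
    using gintP by (simp add: h_def[abs_def] P.prob_space)
  have em: "(\<lambda>x. exp (h x - 1)) \<in> borel_measurable Q" using hm by measurable
  have ebound: "exp (h x - 1) \<le> (1 + (exp A - 1) * g x) / 2" if x: "x \<in> space Q" for x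
  proof -
    have "exp (h x - 1) = exp (A * g x) / 2"
      by (simp add: h_def exp_diff)
    also have "\<dots> \<le> (1 + (exp A - 1) * g x) / 2"
      using exp_chord[OF A] g01[OF x] by simp
    finally show ?thesis .
  qed
  have eint: "integrable Q (\<lambda>x. exp (h x - 1))"
  proof (rule Q.integrable_const_bound[where B="exp A"])
    show "AE x in Q. norm (exp (h x - 1)) \<le> exp A"
    proof (rule AE_I2)
      fix x assume x: "x \<in> space Q"
      have "exp (h x - 1) \<le> (1 + (exp A - 1) * g x) / 2" by (rule ebound[OF x])
      also have "\<dots> \<le> exp A"
      proof -
        have "(exp A - 1) * g x \<le> (exp A - 1) * 1"
          using g01[OF x] A by (intro mult_left_mono) auto
        then have "(exp A - 1) * g x \<le> exp A - 1" by simp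
        moreover have "1 \<le> exp A" using A by simp
        moreover have "\<And>t E. t \<le> E - 1 \<Longrightarrow> 1 \<le> E \<Longrightarrow> (1 + t) / 2 \<le> (E::real)" by (auto simp: field_simps)
        ultimately show ?thesis by blast
      qed
      finally show "norm (exp (h x - 1)) \<le> exp A" by simp
    qed
  qed (rule em)
  have chordint: "integrable Q (\<lambda>x. (1 + (exp A - 1) * g x) / 2)" using gintQ by simp
  have "(\<integral>x. r x * h x - exp (h x - 1) \<partial>Q) \<le> (\<integral>x. r x * ln (r x) \<partial>Q)"
    by (rule integral_mono) (use hintQ eint intQ xlogx_fenchel r0 in auto)
  moreover have "(\<integral>x. r x * h x - exp (h x - 1) \<partial>Q) = (\<integral>x. r x * h x \<partial>Q) - (\<integral>x. exp (h x - 1) \<partial>Q)"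
    by (rule Bochner_Integration.integral_diff[OF hintQ eint])
  moreover have "(\<integral>x. exp (h x - 1) \<partial>Q) \<le> (\<integral>x. (1 + (exp A - 1) * g x) / 2 \<partial>Q)"
    by (rule integral_mono) (use eint chordint ebound in auto)
  moreover have "(\<integral>x. (1 + (exp A - 1) * g x) / 2 \<partial>Q) = (1 + (exp A - 1) * (\<integral>x. g x \<partial>Q)) / 2"
    using gintQ by (simp add: Q.prob_space)
  ultimately have "\<beta> \<ge> (\<integral>x. r x * h x \<partial>Q) - (1 + (exp A - 1) * (\<integral>x. g x \<partial>Q)) / 2"
    using KLle KLeq by linarith
  moreover have "(\<integral>x. r x * h x \<partial>Q) - (1 + (exp A - 1) * (\<integral>x. g x \<partial>Q)) / 2
     = A * (\<integral>x. g x \<partial>P) + 1/2 - ln 2 - (exp A - 1) * (\<integral>x. g x \<partial>Q) / 2"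
    using hP_eq hval by (simp add: field_simps)
  ultimately show ?thesis by linarith
qed

lemma loss_decomp:
  fixes l :: "'t \<Rightarrow> 't \<Rightarrow> real" and th :: "nat \<Rightarrow> 't" and F :: "nat \<Rightarrow> 't \<Rightarrow> real"
  assumes pm: "pseudometric_on \<Theta> l"
    and th: "\<And>k. k < M \<Longrightarrow> th k \<in> \<Theta>"
    and sep: "\<And>i j. i < M \<Longrightarrow> j < M \<Longrightarrow> i \<noteq> j \<Longrightarrow> l (th i) (th j) \<ge> \<alpha>"
    and \<alpha>: "\<alpha> > 0"
    and F: "\<And>k u. F k u = max 0 (1 - 2 * l u (th k) / \<alpha>)"
    and u: "u \<in> \<Theta>" and i: "i < M"
  shows "l u (th i) \<ge> \<alpha> / 2 * (1 - F i u + (\<Sum>k\<in>{..<M}-{i}. F k u))"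
    and "(\<Sum>k<M. F k u) \<le> 1"
proof -
  have l0: "\<And>a b. l a b \<ge> 0" and sym: "\<And>a b. a \<in> \<Theta> \<Longrightarrow> b \<in> \<Theta> \<Longrightarrow> l a b = l b a"
    and tri: "\<And>a b c. a \<in> \<Theta> \<Longrightarrow> b \<in> \<Theta> \<Longrightarrow> c \<in> \<Theta> \<Longrightarrow> l a c \<le> l a b + l b c"
    using pm unfolding pseudometric_on_def by auto
  have F01: "0 \<le> F k u \<and> F k u \<le> 1" for k
    using l0[of u "th k"] \<alpha> by (simp add: F)
  have Fpos: "F k u > 0 \<longleftrightarrow> l u (th k) < \<alpha> / 2" for k
  proof -
    have "F k u > 0 \<longleftrightarrow> 1 - 2 * l u (th k) / \<alpha> > 0" by (simp add: F less_max_iff_disj)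
    also have "\<dots> \<longleftrightarrow> 2 * l u (th k) / \<alpha> < 1" by linarith
    also have "\<dots> \<longleftrightarrow> 2 * l u (th k) < \<alpha>" using \<alpha> by (simp add: divide_less_eq)
    finally show ?thesis by linarith
  qed
  have uniq: "F k' u = 0" if k: "k < M" "k' < M" "k \<noteq> k'" "F k u > 0" for k k'
  proof (rule ccontr)
    assume "F k' u \<noteq> 0"
    then have "F k' u > 0" using F01[of k'] by simp
    then have "l u (th k') < \<alpha> / 2" using Fpos by simp
    moreover have "l u (th k) < \<alpha> / 2" using k(4) Fpos by simp
    moreover have "\<alpha> \<le> l (th k) (th k')" using sep k by simp
    moreover have "l (th k) (th k') \<le> l (th k) u + l u (th k')" using tri th k u by simp
    moreover have "l (th k) u = l u (th k)" using sym th k u by simp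
    ultimately show False by linarith
  qed
  have sumS: "(\<Sum>k\<in>S. F k u) = (if k0 \<in> S then F k0 u else 0)"
    if S: "S \<subseteq> {..<M}" and k0: "k0 < M" "F k0 u > 0" for S k0
  proof -
    have "(\<Sum>k\<in>S. F k u) = (\<Sum>k\<in>S. if k = k0 then F k0 u else 0)"
      by (rule sum.cong[OF refl]) (use uniq[OF k0(1) _ _ k0(2)] S in auto)
    also have "\<dots> = (if k0 \<in> S then F k0 u else 0)"
      using S finite_subset[OF S] by (simp add: sum.delta)
    finally show ?thesis .
  qed
  show "l u (th i) \<ge> \<alpha> / 2 * (1 - F i u + (\<Sum>k\<in>{..<M}-{i}. F k u))"
  proof (cases "\<exists>k0<M. F k0 u > 0")
    case True
    then obtain k0 where k0: "k0 < M" "F k0 u > 0" by auto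
    show ?thesis
    proof (cases "k0 = i")
      case True
      have "(\<Sum>k\<in>{..<M}-{i}. F k u) = 0" using sumS[OF _ k0] True by simp
      moreover have "F i u = 1 - 2 * l u (th i) / \<alpha>" using k0 True by (simp add: F)
      ultimately show ?thesis using \<alpha> by (simp add: field_simps)
    next
      case False
      have s: "(\<Sum>k\<in>{..<M}-{i}. F k u) = F k0 u" using sumS[OF _ k0] False k0 by simp
      have Fi: "F i u = 0" using uniq[OF k0(1) i] False k0 by simp
      have Fk0: "F k0 u = 1 - 2 * l u (th k0) / \<alpha>" using k0 by (simp add: F)
      have "\<alpha> \<le> l (th i) (th k0)" using sep i k0 False by simp
      moreover have "l (th i) (th k0) \<le> l (th i) u + l u (th k0)" using tri th k0 i u by simp
      moreover have "l (th i) u = l u (th i)" using sym th i u by simp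
      ultimately have "\<alpha> - l u (th k0) \<le> l u (th i)" by linarith
      moreover have "\<alpha> / 2 * (1 - F i u + (\<Sum>k\<in>{..<M}-{i}. F k u)) = \<alpha> - l u (th k0)"
        using \<alpha> by (simp add: s Fi Fk0 field_simps)
      ultimately show ?thesis by simp
    qed
  next
    case False
    then have z: "F k u = 0" if "k < M" for k using F01[of k] that by force
    then have "(\<Sum>k\<in>{..<M}-{i}. F k u) = 0" by simp
    moreover have "l u (th i) \<ge> \<alpha> / 2" using Fpos[of i] z[OF i] by simp
    ultimately show ?thesis using z[OF i] by simp
  qed
  show "(\<Sum>k<M. F k u) \<le> 1"
  proof (cases "\<exists>k0<M. F k0 u > 0")
    case True
    then obtain k0 where k0: "k0 < M" "F k0 u > 0" by auto
    show ?thesis using sumS[of "{..<M}", OF _ k0] F01[of k0] k0 by simp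
  next
    case False
    then have z: "F k u = 0" if "k < M" for k using F01[of k] that by force
    then show ?thesis by simp
  qed
qed

lemma lin_int:
  fixes \<phi> :: "nat \<Rightarrow> 'a \<Rightarrow> real"
  assumes N: "prob_space N" and fin: "finite S"
    and int: "\<And>k. k \<in> insert i S \<Longrightarrow> integrable N (\<phi> k)"
  shows "(\<integral>x. c * (1 - \<phi> i x + (\<Sum>k\<in>S. \<phi> k x)) \<partial>N)
      = c * (1 - (\<integral>x. \<phi> i x \<partial>N) + (\<Sum>k\<in>S. \<integral>x. \<phi> k x \<partial>N))"
proof -
  interpret prob_space N by (rule N)
  have iS: "integrable N (\<lambda>x. \<Sum>k\<in>S. \<phi> k x)" using int by auto
  have ii: "integrable N (\<phi> i)" using int by auto
  have "(\<integral>x. 1 - \<phi> i x + (\<Sum>k\<in>S. \<phi> k x) \<partial>N) = (\<integral>x. 1 - \<phi> i x \<partial>N) + (\<integral>x. (\<Sum>k\<in>S. \<phi> k x) \<partial>N)"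
    by (rule Bochner_Integration.integral_add) (use ii iS in auto)
  also have "(\<integral>x. 1 - \<phi> i x \<partial>N) = 1 - (\<integral>x. \<phi> i x \<partial>N)"
    using ii by (simp add: prob_space)
  also have "(\<integral>x. (\<Sum>k\<in>S. \<phi> k x) \<partial>N) = (\<Sum>k\<in>S. \<integral>x. \<phi> k x \<partial>N)"
    by (rule Bochner_Integration.integral_sum) (use int in auto)
  finally show ?thesis by simp
qed

theorem theorem11:
  fixes X :: "'x measure" and \<P> :: "'x measure set"
    and \<theta> :: "'x measure \<Rightarrow> real ^ 'd" and \<Theta> :: "(real ^ 'd) set"
    and l :: "real ^ 'd \<Rightarrow> real ^ 'd \<Rightarrow> real"
    and s :: nat and f :: "(nat \<Rightarrow> 'x) \<Rightarrow> 'y" and Y :: "'y measure"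
    and \<epsilon> \<alpha> \<beta> D :: real and M :: nat and p :: "nat \<Rightarrow> 'x measure"
  assumes P_prob: "\<And>q. q \<in> \<P> \<Longrightarrow> prob_space q \<and> sets q = sets X"
    and \<theta>_inj: "inj_on \<theta> \<P>" and \<theta>_range: "\<theta> ` \<P> \<subseteq> \<Theta>"
    and l_pm: "pseudometric_on \<Theta> l"
    and l_meas: "\<And>t. t \<in> \<Theta> \<Longrightarrow> (\<lambda>u. l u t) \<in> borel_measurable (restrict_space borel \<Theta>)"
    and f_meas: "f \<in> measurable (sample_space s X) Y"
    and M_ge: "M \<ge> 2"
    and V_sub: "\<And>i. i < M \<Longrightarrow> p i \<in> \<P>"
    and V_inj: "inj_on p {..<M}"
    and \<alpha>_nonneg: "\<alpha> \<ge> 0"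
    and sep: "\<And>i j. i < M \<Longrightarrow> j < M \<Longrightarrow> i \<noteq> j \<Longrightarrow> l (\<theta> (p i)) (\<theta> (p j)) \<ge> \<alpha>"
    and kl: "\<And>i j. i < M \<Longrightarrow> j < M \<Longrightarrow> i \<noteq> j \<Longrightarrow>
               kl_div (prod_pow (p i) s) (prod_pow (p j) s) \<le> ereal \<beta>"
    and coup: "\<And>i j. i < M \<Longrightarrow> j < M \<Longrightarrow> i \<noteq> j \<Longrightarrow>
               f_coupling_bound s X f Y (prod_pow (p i) s) (prod_pow (p j) s) D"
  shows "(INF K\<in>f_restricted_dp_estimators s X f Y \<Theta> \<epsilon>. SUP q\<in>\<P>. risk s f K l (\<theta> q) q)
         \<ge> ennreal (max (\<alpha> / 2 * (1 - (\<beta> + ln 2) / ln (real M)))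
                         (0.4 * \<alpha> * min 1 (real M / exp (10 * \<epsilon> * D))))"
proof (cases "\<alpha> = 0")
  case True
  then show ?thesis by simp
next
  case False
  then have \<alpha>: "\<alpha> > 0" using \<alpha>_nonneg by simp
  define T where "T = restrict_space (borel :: (real ^ 'd) measure) \<Theta>"
  define c where "c = max \<epsilon> 0 * max D 0"
  define \<rho> where "\<rho> = 0.8 * min 1 (real M / exp (10 * c))"
  define tt where "tt = (\<beta> + ln 2) / ln (real M)"
  define th where "th k = \<theta> (p k)" for k
  define F where "F k u = max 0 (1 - 2 * l u (th k) / \<alpha>)" for k u
  define Pm where "Pm i = prod_pow (p i) s" for i
  let ?S = "sample_space s X"
  have c0: "c \<ge> 0" by (simp add: c_def)
  have M2: "M \<ge> 2" by (rule M_ge)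
  have th\<Theta>: "th k \<in> \<Theta>" if "k < M" for k using V_sub[OF that] \<theta>_range by (auto simp: th_def)
  have spT: "space T = \<Theta>" by (simp add: T_def space_restrict_space)
  have l0: "\<And>a b. l a b \<ge> 0" using l_pm unfolding pseudometric_on_def by auto
  have Fm: "F k \<in> borel_measurable T" if k: "k < M" for k
  proof -
    have lm[measurable]: "(\<lambda>u. l u (th k)) \<in> borel_measurable T"
      using l_meas[OF th\<Theta>[OF k]] by (simp add: T_def)
    show ?thesis unfolding F_def[abs_def] by measurable
  qed
  have F01: "0 \<le> F k u \<and> F k u \<le> 1" for k u
    using l0[of u "th k"] \<alpha> by (simp add: F_def)
  have Pprob: "prob_space (Pm k)" if "k < M" for k
    unfolding Pm_def prod_pow_def
    by (rule prob_space_PiM) (use P_prob[OF V_sub[OF that]] in auto)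
  have Psets: "sets (Pm k) = sets ?S" if "k < M" for k
    unfolding Pm_def prod_pow_def sample_space_def
    by (rule sets_PiM_cong) (use P_prob[OF V_sub[OF that]] in auto)
  have spP: "space (Pm k) = space ?S" if "k < M" for k
    using Psets[OF that] by (rule sets_eq_imp_space_eq)
  have sep': "l (th i) (th j) \<ge> \<alpha>" if "i < M" "j < M" "i \<noteq> j" for i j
    using sep[OF that] by (simp add: th_def)
  have Feq: "F k u = max 0 (1 - 2 * l u (th k) / \<alpha>)" for k u by (simp add: F_def)
  have LD1: "l u (th i) \<ge> \<alpha> / 2 * (1 - F i u + (\<Sum>k\<in>{..<M}-{i}. F k u))"
    if "u \<in> \<Theta>" "i < M" for u i
    by (rule loss_decomp(1)[where th=th and F=F and M=M]) (use l_pm th\<Theta> sep' \<alpha> Feq that in auto)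
  have LD2: "(\<Sum>k<M. F k u) \<le> 1" if "u \<in> \<Theta>" for u
    by (rule loss_decomp(2)[where th=th and F=F and M=M and i=0]) (use l_pm th\<Theta> sep' \<alpha> Feq that M2 in auto)
  have M0: "0 < M" using M2 by simp
  have fS: "f x \<in> space Y" if "x \<in> space ?S" for x using f_meas that by (rule measurable_space)
  have fP: "f \<in> measurable (Pm k) Y" if "k < M" for k
    using f_meas by (simp add: measurable_cong_sets[OF Psets[OF that] refl])
  have bound: "ennreal (max (\<alpha> / 2 * (1 - (\<beta> + ln 2) / ln (real M)))
                         (0.4 * \<alpha> * min 1 (real M / exp (10 * \<epsilon> * D))))
      \<le> ennreal (max (\<alpha> / 2 * (1 - tt)) (\<alpha> / 2 * \<rho>))"
  proof (rule ennreal_leI)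
    have "min 1 (real M / exp (10 * \<epsilon> * D)) \<le> min 1 (real M / exp (10 * c))"
    proof (cases "\<epsilon> \<ge> 0 \<and> D \<ge> 0")
      case True
      then have "c = \<epsilon> * D" by (simp add: c_def)
      then show ?thesis by (simp add: mult.assoc)
    next
      case False
      then have "c = 0" by (auto simp: c_def)
      then show ?thesis using M2 by simp
    qed
    then have "0.4 * \<alpha> * min 1 (real M / exp (10 * \<epsilon> * D)) \<le> \<alpha> / 2 * \<rho>"
      using \<alpha> by (simp add: \<rho>_def)
    then show "max (\<alpha> / 2 * (1 - (\<beta> + ln 2) / ln (real M))) (0.4 * \<alpha> * min 1 (real M / exp (10 * \<epsilon> * D)))
      \<le> max (\<alpha> / 2 * (1 - tt)) (\<alpha> / 2 * \<rho>)" by (simp add: tt_def)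
  qed
  have main: "ennreal (max (\<alpha> / 2 * (1 - tt)) (\<alpha> / 2 * \<rho>)) \<le> (SUP q\<in>\<P>. risk s f K' l (\<theta> q) q)"
    if K': "K' \<in> f_restricted_dp_estimators s X f Y \<Theta> \<epsilon>" for K'
  proof -
    have Km: "K' \<in> measurable Y (prob_algebra T)" and dpK: "dp_kernel s X \<epsilon> (K' \<circ> f)"
      using K' by (auto simp: f_restricted_dp_estimators_def T_def)
    have Ky: "prob_space (K' y) \<and> sets (K' y) = sets T" if "y \<in> space Y" for y
      using measurable_space[OF Km that] by (simp add: space_prob_algebra)
    have spK: "space (K' y) = \<Theta>" if "y \<in> space Y" for y
      using sets_eq_imp_space_eq[of "K' y" T] Ky[OF that] spT by simp
    define G where "G k y = (\<integral>u. F k u \<partial>K' y)" for k y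
    have Gm: "G k \<in> borel_measurable Y" if k: "k < M" for k
      using measurable_compose[OF measurable_prob_algebraD[OF Km] integral_measurable_subprob_algebra[OF Fm[OF k]]]
      by (simp add: G_def[abs_def])
    have FmK: "F k \<in> borel_measurable (K' y)" if "k < M" "y \<in> space Y" for k y
      using Fm[OF that(1)] by (simp add: measurable_cong_sets[OF conjunct2[OF Ky[OF that(2)]] refl])
    have Fint: "integrable (K' y) (F k)" if "k < M" "y \<in> space Y" for k y
    proof -
      interpret KY: prob_space "K' y" using Ky[OF that(2)] by simp
      show ?thesis by (rule KY.integrable_const_bound[where B=1]) (use F01 FmK[OF that] in auto)
    qed
    have G01: "0 \<le> G k y \<and> G k y \<le> 1" if "k < M" "y \<in> space Y" for k y
    proof -
      interpret KY: prob_space "K' y" using Ky[OF that(2)] by simp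
      have "G k y \<le> (\<integral>u. 1 \<partial>K' y)" unfolding G_def
        by (rule integral_mono) (use Fint[OF that] F01 in auto)
      moreover have "G k y \<ge> 0" unfolding G_def by (rule Bochner_Integration.integral_nonneg) (use F01 in auto)
      ultimately show ?thesis by (simp add: KY.prob_space)
    qed
    define a where "a i k = (\<integral>x. G k (f x) \<partial>Pm i)" for i k
    have Gfm: "(\<lambda>x. G k (f x)) \<in> borel_measurable (Pm i)" if "k < M" "i < M" for k i
      using measurable_compose[OF fP[OF that(2)] Gm[OF that(1)]] by simp
    have Gfint: "integrable (Pm i) (\<lambda>x. G k (f x))" if "k < M" "i < M" for k i
    proof -
      interpret PI: prob_space "Pm i" using Pprob[OF that(2)] .
      show ?thesis by (rule PI.integrable_const_bound[where B=1])
        (use Gfm[OF that] G01[OF that(1)] fS spP[OF that(2)] in auto)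
    qed
    have a01: "0 \<le> a i k \<and> a i k \<le> 1" if "i < M" "k < M" for i k
    proof -
      interpret PI: prob_space "Pm i" using Pprob[OF that(1)] .
      have "a i k \<le> (\<integral>x. 1 \<partial>Pm i)" unfolding a_def
        by (rule integral_mono) (use Gfint[OF that(2,1)] G01[OF that(2)] fS spP[OF that(1)] in auto)
      moreover have "a i k \<ge> 0" unfolding a_def
        by (rule Bochner_Integration.integral_nonneg) (use G01[OF that(2)] fS spP[OF that(1)] in auto)
      ultimately show ?thesis by (simp add: PI.prob_space)
    qed
    have sumG: "(\<Sum>k<M. G k y) \<le> 1" if y: "y \<in> space Y" for y
    proof -
      interpret KY: prob_space "K' y" using Ky[OF y] by simp
      have "(\<Sum>k<M. G k y) = (\<integral>u. (\<Sum>k<M. F k u) \<partial>K' y)"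
        unfolding G_def by (rule Bochner_Integration.integral_sum[symmetric]) (use Fint y in auto)
      also have "\<dots> \<le> (\<integral>u. 1 \<partial>K' y)"
      proof (rule integral_mono)
        show "integrable (K' y) (\<lambda>u. \<Sum>k<M. F k u)" using Fint y by auto
        show "integrable (K' y) (\<lambda>u. 1)" by simp
        fix u assume "u \<in> space (K' y)"
        then have u: "u \<in> \<Theta>" using spK[OF y] by simp
        show "(\<Sum>k<M. F k u) \<le> 1" by (rule LD2[OF u])
      qed
      finally show ?thesis by (simp add: KY.prob_space)
    qed
    have GfS: "0 \<le> G k (f x) \<and> G k (f x) \<le> 1" if "k < M" "i < M" "x \<in> space (Pm i)" for k i x
      using G01[OF that(1) fS] spP[OF that(2)] that(3) by auto
    have Gint_eq: "(\<integral>\<^sup>+u. ennreal (F k u) \<partial>K' y) = ennreal (G k y)" if "k < M" "y \<in> space Y" for k y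
      unfolding G_def by (rule nn_integral_eq_integral) (use Fint[OF that] F01 in auto)
    have Rb: "ennreal (\<alpha> / 2 * (1 - a i i + (\<Sum>k\<in>{..<M}-{i}. a i k))) \<le> risk s f K' l (\<theta> (p i)) (p i)"
      if i: "i < M" for i
    proof -
      define S where "S = {..<M} - {i}"
      have finS: "finite S" by (simp add: S_def)
      have iS: "k < M" if "k \<in> insert i S" for k using i that by (auto simp: S_def)
      have inner: "ennreal (\<alpha> / 2 * (1 - G i y + (\<Sum>k\<in>S. G k y))) \<le> (\<integral>\<^sup>+u. ennreal (l u (th i)) \<partial>K' y)"
        if y: "y \<in> space Y" for y
      proof -
        interpret KY: prob_space "K' y" using Ky[OF y] by simp
        have FiS: "integrable (K' y) (F k)" if "k \<in> insert i S" for k by (rule Fint[OF iS[OF that] y])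
        have intH: "integrable (K' y) (\<lambda>u. \<alpha> / 2 * (1 - F i u + (\<Sum>k\<in>S. F k u)))"
          by (intro integrable_mult_right Bochner_Integration.integrable_add Bochner_Integration.integrable_diff
              integrable_const Bochner_Integration.integrable_sum FiS) auto
        have H0: "0 \<le> \<alpha> / 2 * (1 - F i u + (\<Sum>k\<in>S. F k u))" for u
        proof -
          have "0 \<le> 1 - F i u" using F01[of i u] by simp
          moreover have "0 \<le> (\<Sum>k\<in>S. F k u)" using F01 by (simp add: sum_nonneg)
          ultimately show ?thesis using \<alpha> by simp
        qed
        have LI: "(\<integral>u. \<alpha> / 2 * (1 - F i u + (\<Sum>k\<in>S. F k u)) \<partial>K' y) = \<alpha> / 2 * (1 - G i y + (\<Sum>k\<in>S. G k y))"
          unfolding G_def by (rule lin_int[where \<phi>=F]) (use Ky[OF y] Fint[OF _ y] iS finS in auto)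
        have "ennreal (\<alpha> / 2 * (1 - G i y + (\<Sum>k\<in>S. G k y))) = ennreal (\<integral>u. \<alpha> / 2 * (1 - F i u + (\<Sum>k\<in>S. F k u)) \<partial>K' y)"
          by (simp only: LI)
        also have "\<dots> = (\<integral>\<^sup>+u. ennreal (\<alpha> / 2 * (1 - F i u + (\<Sum>k\<in>S. F k u))) \<partial>K' y)"
          by (rule nn_integral_eq_integral[symmetric]) (use intH H0 in auto)
        also have "\<dots> \<le> (\<integral>\<^sup>+u. ennreal (l u (th i)) \<partial>K' y)"
          by (rule nn_integral_mono) (use LD1 spK[OF y] i in \<open>auto simp: S_def intro!: ennreal_leI\<close>)
        finally show ?thesis .
      qed
      interpret PI: prob_space "Pm i" using Pprob[OF i] .
      have GiS: "integrable (Pm i) (\<lambda>x. G k (f x))" if "k \<in> insert i S" for k by (rule Gfint[OF iS[OF that] i])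
      have intO: "integrable (Pm i) (\<lambda>x. \<alpha> / 2 * (1 - G i (f x) + (\<Sum>k\<in>S. G k (f x))))"
        by (intro integrable_mult_right Bochner_Integration.integrable_add Bochner_Integration.integrable_diff
              integrable_const Bochner_Integration.integrable_sum GiS) auto
      have O0: "0 \<le> \<alpha> / 2 * (1 - G i (f x) + (\<Sum>k\<in>S. G k (f x)))" if x: "x \<in> space (Pm i)" for x
      proof -
        have "0 \<le> 1 - G i (f x)" using GfS[OF i i x] by simp
        moreover have "0 \<le> (\<Sum>k\<in>S. G k (f x))" using GfS[OF _ i x] iS by (intro sum_nonneg) auto
        ultimately show ?thesis using \<alpha> by simp
      qed
      have LO: "(\<integral>x. \<alpha> / 2 * (1 - G i (f x) + (\<Sum>k\<in>S. G k (f x))) \<partial>Pm i) = \<alpha> / 2 * (1 - a i i + (\<Sum>k\<in>S. a i k))"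
        unfolding a_def by (rule lin_int[where \<phi>="\<lambda>k x. G k (f x)"]) (use Pprob[OF i] Gfint[OF _ i] iS finS in auto)
      have "ennreal (\<alpha> / 2 * (1 - a i i + (\<Sum>k\<in>S. a i k))) = ennreal (\<integral>x. \<alpha> / 2 * (1 - G i (f x) + (\<Sum>k\<in>S. G k (f x))) \<partial>Pm i)"
        by (simp only: LO)
      also have "\<dots> = (\<integral>\<^sup>+x. ennreal (\<alpha> / 2 * (1 - G i (f x) + (\<Sum>k\<in>S. G k (f x)))) \<partial>Pm i)"
        by (rule nn_integral_eq_integral[symmetric]) (use intO O0 in \<open>auto intro: AE_I2\<close>)
      also have "\<dots> \<le> (\<integral>\<^sup>+x. (\<integral>\<^sup>+u. ennreal (l u (th i)) \<partial>K' (f x)) \<partial>Pm i)"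
        by (rule nn_integral_mono) (use inner fS spP[OF i] in auto)
      also have "\<dots> = risk s f K' l (\<theta> (p i)) (p i)"
        by (simp add: risk_def th_def Pm_def)
      finally show ?thesis by (simp add: S_def)
    qed
    have priv: "G k (f x) \<le> exp (max \<epsilon> 0 * real (hamming s x z)) * G k (f z)"
      if k: "k < M" and x: "x \<in> space ?S" and z: "z \<in> space ?S" for k x z
    proof -
      have setsKf: "\<And>w. w \<in> space ?S \<Longrightarrow> sets ((K' \<circ> f) w) = sets T" using Ky fS by simp
      have gp: "emeasure (K' (f x)) A \<le> ennreal (exp (\<epsilon> * real (hamming s x z))) * emeasure (K' (f z)) A"
        if "A \<in> sets T" for A
        using group_privacy[where K="K' \<circ> f" and \<Sigma>="sets T", OF dpK setsKf x z that] by simp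
      have "(\<integral>\<^sup>+u. ennreal (F k u) \<partial>K' (f x)) \<le> ennreal (exp (\<epsilon> * real (hamming s x z))) * (\<integral>\<^sup>+u. ennreal (F k u) \<partial>K' (f z))"
        by (rule nn_integral_le_scaled) (use Ky[OF fS[OF x]] Ky[OF fS[OF z]] gp FmK[OF k fS[OF z]] in auto)
      then have "ennreal (G k (f x)) \<le> ennreal (exp (\<epsilon> * real (hamming s x z)) * G k (f z))"
        using Gint_eq[OF k fS[OF x]] Gint_eq[OF k fS[OF z]] G01[OF k fS[OF z]] by (simp add: ennreal_mult)
      then have "G k (f x) \<le> exp (\<epsilon> * real (hamming s x z)) * G k (f z)"
        using G01[OF k fS[OF z]] by simp
      also have "\<dots> \<le> exp (max \<epsilon> 0 * real (hamming s x z)) * G k (f z)"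
      proof (rule mult_right_mono)
        have "\<epsilon> * real (hamming s x z) \<le> max \<epsilon> 0 * real (hamming s x z)" by (rule mult_right_mono) auto
        then show "exp (\<epsilon> * real (hamming s x z)) \<le> exp (max \<epsilon> 0 * real (hamming s x z))" by simp
      qed (use G01[OF k fS[OF z]] in simp)
      finally show ?thesis .
    qed
    have DPi: "a j i \<ge> exp (-5*c) * ((1+5*c) * a i i - c)" if ij: "i < M" "j < M" "i \<noteq> j" for i j
    proof -
      have "(\<integral>x. G i (f x) \<partial>Pm j) \<ge> exp (-(5*c)) * ((1+(5*c)) * (\<integral>x. G i (f x) \<partial>Pm i) - max \<epsilon> 0 * max D 0)"
        by (rule coupling_ineq[where G="G i" and e="max \<epsilon> 0" and t="5*c"])
           (use f_meas Gm[OF ij(1)] G01[OF ij(1)] priv[OF ij(1)] Pprob[OF ij(1)] Pprob[OF ij(2)] Psets[OF ij(1)] Psets[OF ij(2)] coup[OF ij] in \<open>auto simp: Pm_def\<close>)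
      then show ?thesis by (simp add: a_def c_def)
    qed
    have KLi: "\<beta> \<ge> ln (real M) * a i i + 1/2 - ln 2 - (exp (ln (real M)) - 1) * a 0 i / 2"
      if i: "0 < i" "i < M" for i
    proof -
      have "\<beta> \<ge> ln (real M) * (\<integral>x. G i (f x) \<partial>Pm i) + 1/2 - ln 2 - (exp (ln (real M)) - 1) * (\<integral>x. G i (f x) \<partial>Pm 0) / 2"
        by (rule kl_bound[where P="Pm i" and Q="Pm 0" and g="\<lambda>x. G i (f x)"])
           (use Pprob[OF i(2)] Pprob[OF M0] Psets[OF i(2)] Psets[OF M0] kl[of i 0] i M0 M2 Gfm[OF i(2) M0] GfS[OF i(2) M0] in \<open>auto simp: Pm_def\<close>)
      then show ?thesis by (simp add: a_def)
    qed
    have sum0: "(\<Sum>k<M. a 0 k) \<le> 1"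
    proof -
      interpret P0: prob_space "Pm 0" using Pprob[OF M0] .
      have "(\<Sum>k<M. a 0 k) = (\<integral>x. (\<Sum>k<M. G k (f x)) \<partial>Pm 0)"
        unfolding a_def by (rule Bochner_Integration.integral_sum[symmetric]) (use Gfint M0 in auto)
      also have "\<dots> \<le> (\<integral>x. 1 \<partial>Pm 0)"
        by (rule integral_mono) (use Gfint M0 sumG fS spP[OF M0] in auto)
      finally show ?thesis by (simp add: P0.prob_space)
    qed
    have "\<exists>i<M. a i i \<le> (\<beta> + ln 2) / ln (real M)"
      by (rule fano_finite[where a=a]) (use M2 a01 M0 sum0 KLi in auto)
    then obtain i1 where i1: "i1 < M" "a i1 i1 \<le> tt" unfolding tt_def by auto
    have \<rho>0: "\<rho> > 0" using M2 by (simp add: \<rho>_def)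
    have \<rho>8: "\<rho> \<le> 0.8" by (simp add: \<rho>_def)
    have const: "(real M - 1) * exp (-5*c) * (1 + 4*c) \<ge> \<rho>" unfolding \<rho>_def by (rule dp_const[OF M2 c0])
    have "\<exists>i<M. 1 - a i i + (\<Sum>k\<in>{..<M}-{i}. a i k) \<ge> \<rho>"
      by (rule dp_finite[where a=a and c=c and \<rho>=\<rho>]) (use M2 c0 a01 DPi \<rho>0 \<rho>8 const in auto)
    then obtain i2 where i2: "i2 < M" "1 - a i2 i2 + (\<Sum>k\<in>{..<M}-{i2}. a i2 k) \<ge> \<rho>" by auto
    have sup: "risk s f K' l (\<theta> (p i)) (p i) \<le> (SUP q\<in>\<P>. risk s f K' l (\<theta> q) q)" if "i < M" for i
      by (rule SUP_upper) (rule V_sub[OF that])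
    have r1: "ennreal (\<alpha> / 2 * (1 - tt)) \<le> (SUP q\<in>\<P>. risk s f K' l (\<theta> q) q)"
    proof -
      have "(\<Sum>k\<in>{..<M}-{i1}. a i1 k) \<ge> 0" using a01 i1 by (intro sum_nonneg) auto
      then have "\<alpha> / 2 * (1 - tt) \<le> \<alpha> / 2 * (1 - a i1 i1 + (\<Sum>k\<in>{..<M}-{i1}. a i1 k))"
        using i1 \<alpha> by (intro mult_left_mono) auto
      then have "ennreal (\<alpha> / 2 * (1 - tt)) \<le> ennreal (\<alpha> / 2 * (1 - a i1 i1 + (\<Sum>k\<in>{..<M}-{i1}. a i1 k)))"
        by (rule ennreal_leI)
      also have "\<dots> \<le> risk s f K' l (\<theta> (p i1)) (p i1)" by (rule Rb[OF i1(1)])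
      also have "\<dots> \<le> (SUP q\<in>\<P>. risk s f K' l (\<theta> q) q)" by (rule sup[OF i1(1)])
      finally show ?thesis .
    qed
    have r2: "ennreal (\<alpha> / 2 * \<rho>) \<le> (SUP q\<in>\<P>. risk s f K' l (\<theta> q) q)"
    proof -
      have "\<alpha> / 2 * \<rho> \<le> \<alpha> / 2 * (1 - a i2 i2 + (\<Sum>k\<in>{..<M}-{i2}. a i2 k))"
        using i2 \<alpha> by (intro mult_left_mono) auto
      then have "ennreal (\<alpha> / 2 * \<rho>) \<le> ennreal (\<alpha> / 2 * (1 - a i2 i2 + (\<Sum>k\<in>{..<M}-{i2}. a i2 k)))"
        by (rule ennreal_leI)
      also have "\<dots> \<le> risk s f K' l (\<theta> (p i2)) (p i2)" by (rule Rb[OF i2(1)])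
      also have "\<dots> \<le> (SUP q\<in>\<P>. risk s f K' l (\<theta> q) q)" by (rule sup[OF i2(1)])
      finally show ?thesis .
    qed
    show ?thesis
    proof (cases "\<alpha> / 2 * (1 - tt) \<le> \<alpha> / 2 * \<rho>")
      case True then show ?thesis using r2 by (simp add: max_def)
    next
      case False then show ?thesis using r1 by (simp add: max_def)
    qed
  qed
  show ?thesis
    by (rule order_trans[OF bound]) (rule INF_greatest, rule main)
qed

end
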